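(* Let $H$ be a graph with at least one edge, and suppose $H\cong H_1\times H_2$ where neither $H_1$ nor $H_2$ is isomorphic to $K_1^*$. Then $H$ is not projective.
   Context: Graphs are finite, undirected, without parallel edges, loops allowed; $K_1^*$ is the one-vertex graph with a loop. A homomorphism is an edge-preserving vertex map. The direct product $H_1\times H_2$ has vertex set $V(H_1)\times V(H_2)$ with $(x_1,y_1)(x_2,y_2)$ an edge iff $x_1x_2\in E(H_1)$ and $y_1y_2\in E(H_2)$; $H^m$ is the $m$-fold product and $\pi_i(x_1,\dots,x_m)=x_i$. A homomorphism $f\colon H^m\to H$ is idempotent if $f(x,\dots,x)=x$ for all $x$. $H$ is projective if for every $m\ge2$ every idempotent homomorphism $H^m\to H$ equals some $\pi_i$. *)

theory Defs
  imports Main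
begin

record 'a graph =
  verts :: "'a set"
  adj :: "'a \<Rightarrow> 'a \<Rightarrow> bool"

definition is_graph :: "('a, 'm) graph_scheme \<Rightarrow> bool" where
  "is_graph G \<longleftrightarrow> finite (verts G)
     \<and> (\<forall>x y. adj G x y \<longrightarrow> x \<in> verts G \<and> y \<in> verts G)
     \<and> (\<forall>x y. adj G x y \<longrightarrow> adj G y x)"

definition has_edge :: "'a graph \<Rightarrow> bool" where
  "has_edge G \<longleftrightarrow> (\<exists>x y. adj G x y)"

definition graph_hom :: "'a graph \<Rightarrow> 'b graph \<Rightarrow> ('a \<Rightarrow> 'b) \<Rightarrow> bool" where
  "graph_hom G H f \<longleftrightarrow> (\<forall>x\<in>verts G. f x \<in> verts H)
     \<and> (\<forall>x y. adj G x y \<longrightarrow> adj H (f x) (f y))"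

definition graph_iso :: "'a graph \<Rightarrow> 'b graph \<Rightarrow> ('a \<Rightarrow> 'b) \<Rightarrow> bool" where
  "graph_iso G H f \<longleftrightarrow> bij_betw f (verts G) (verts H)
     \<and> (\<forall>x\<in>verts G. \<forall>y\<in>verts G. adj G x y \<longleftrightarrow> adj H (f x) (f y))"

definition isomorphic :: "'a graph \<Rightarrow> 'b graph \<Rightarrow> bool" where
  "isomorphic G H \<longleftrightarrow> (\<exists>f. graph_iso G H f)"

definition dprod :: "'a graph \<Rightarrow> 'b graph \<Rightarrow> ('a \<times> 'b) graph" where
  "dprod G H = \<lparr>verts = verts G \<times> verts H,
     adj = (\<lambda>(x1, y1) (x2, y2). adj G x1 x2 \<and> adj H y1 y2)\<rparr>"

text \<open>m-fold direct power; vertices are lists of length m (index i = coordinate i+1).\<close>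
definition gpow :: "'a graph \<Rightarrow> nat \<Rightarrow> 'a list graph" where
  "gpow G m = \<lparr>verts = {xs. length xs = m \<and> set xs \<subseteq> verts G},
     adj = (\<lambda>xs ys. length xs = m \<and> length ys = m \<and> (\<forall>i<m. adj G (xs ! i) (ys ! i)))\<rparr>"

definition K1_star :: "unit graph" where
  "K1_star = \<lparr>verts = UNIV, adj = (\<lambda>_ _. True)\<rparr>"

definition idempotent_op :: "'a graph \<Rightarrow> nat \<Rightarrow> ('a list \<Rightarrow> 'a) \<Rightarrow> bool" where
  "idempotent_op H m f \<longleftrightarrow> (\<forall>x\<in>verts H. f (replicate m x) = x)"

definition projective :: "'a graph \<Rightarrow> bool" where
  "projective H \<longleftrightarrow> (\<forall>m\<ge>2. \<forall>f. graph_hom (gpow H m) H f \<and> idempotent_op H m f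
      \<longrightarrow> (\<exists>i<m. \<forall>xs\<in>verts (gpow H m). f xs = xs ! i))"

end

theory Submission
  imports Defs
begin

lemma two_verts:
  assumes G: "is_graph G" and e: "adj G a b" and ni: "\<not> isomorphic G K1_star"
  shows "\<exists>u v. u \<in> verts G \<and> v \<in> verts G \<and> u \<noteq> v"
proof (rule ccontr)
  assume "\<not> ?thesis"
  have av: "a \<in> verts G" "b \<in> verts G" using G e unfolding is_graph_def by auto
  with \<open>\<not> ?thesis\<close> have V: "verts G = {a}" by blast
  with av e have aa: "adj G a a" by auto
  have "graph_iso G K1_star (\<lambda>_. ())"
    unfolding graph_iso_def K1_star_def using V aa
    by (auto simp: bij_betw_def)
  with ni show False unfolding isomorphic_def by blast
qed

theorem mainTheorem9:
  fixes H :: "'a graph" and H1 :: "'b graph" and H2 :: "'c graph"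
  assumes "is_graph H" and "is_graph H1" and "is_graph H2"
    and "has_edge H"
    and "isomorphic H (dprod H1 H2)"
    and "\<not> isomorphic H1 K1_star" and "\<not> isomorphic H2 K1_star"
  shows "\<not> projective H"
proof
  assume proj: "projective H"
  obtain \<phi> where iso: "graph_iso H (dprod H1 H2) \<phi>" using assms(5) unfolding isomorphic_def by blast
  have bij: "bij_betw \<phi> (verts H) (verts H1 \<times> verts H2)"
    using iso unfolding graph_iso_def dprod_def by simp
  define g where "g = inv_into (verts H) \<phi>"
  have gbij: "bij_betw g (verts H1 \<times> verts H2) (verts H)"
    unfolding g_def by (rule bij_betw_inv_into[OF bij])
  have fg: "\<And>p. p \<in> verts H1 \<times> verts H2 \<Longrightarrow> \<phi> (g p) = p"
    unfolding g_def using bij by (meson bij_betw_inv_into_right)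
  have gf: "\<And>x. x \<in> verts H \<Longrightarrow> g (\<phi> x) = x"
    unfolding g_def using bij by (simp add: bij_betw_def)
  have gin: "\<And>p. p \<in> verts H1 \<times> verts H2 \<Longrightarrow> g p \<in> verts H"
    using gbij bij_betwE by blast
  have phin: "\<And>x. x \<in> verts H \<Longrightarrow> \<phi> x \<in> verts H1 \<times> verts H2"
    using bij bij_betwE by blast
  have adjH: "\<And>x y. x \<in> verts H \<Longrightarrow> y \<in> verts H \<Longrightarrow>
     adj H x y \<longleftrightarrow> adj H1 (fst (\<phi> x)) (fst (\<phi> y)) \<and> adj H2 (snd (\<phi> x)) (snd (\<phi> y))"
    using iso unfolding graph_iso_def dprod_def by (auto split: prod.splits)
  have ginj: "\<And>p q. p \<in> verts H1 \<times> verts H2 \<Longrightarrow> q \<in> verts H1 \<times> verts H2 \<Longrightarrow> g p = g q \<Longrightarrow> p = q"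
    using fg by metis
  obtain x y where xy: "adj H x y" using assms(4) unfolding has_edge_def by blast
  have xyv: "x \<in> verts H" "y \<in> verts H" using assms(1) xy unfolding is_graph_def by auto
  have e1: "adj H1 (fst (\<phi> x)) (fst (\<phi> y))" and e2: "adj H2 (snd (\<phi> x)) (snd (\<phi> y))"
    using adjH[OF xyv] xy by auto
  obtain v1 v2 where v: "v1 \<in> verts H1" "v2 \<in> verts H1" "v1 \<noteq> v2"
    using two_verts[OF assms(2) e1 assms(6)] by blast
  obtain w1 w2 where w: "w1 \<in> verts H2" "w2 \<in> verts H2" "w1 \<noteq> w2"
    using two_verts[OF assms(3) e2 assms(7)] by blast
  define f where "f = (\<lambda>xs::'a list. g (fst (\<phi> (xs!0)), snd (\<phi> (xs!1))))"
  have hom: "graph_hom (gpow H 2) H f"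
    unfolding graph_hom_def
  proof (intro conjI allI impI ballI)
    fix xs assume "xs \<in> verts (gpow H 2)"
    hence "xs!0 \<in> verts H" "xs!1 \<in> verts H" unfolding gpow_def by (auto intro: nth_mem)
    thus "f xs \<in> verts H" unfolding f_def using phin gin by (auto simp: mem_Times_iff)
  next
    fix xs ys assume a: "adj (gpow H 2) xs ys"
    hence a0: "adj H (xs!0) (ys!0)" and a1: "adj H (xs!1) (ys!1)" unfolding gpow_def by auto
    have vs: "xs!0 \<in> verts H" "ys!0 \<in> verts H" "xs!1 \<in> verts H" "ys!1 \<in> verts H"
      using a0 a1 assms(1) unfolding is_graph_def by auto
    define p where "p = (fst (\<phi> (xs!0)), snd (\<phi> (xs!1)))"
    define q where "q = (fst (\<phi> (ys!0)), snd (\<phi> (ys!1)))"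
    have pq: "p \<in> verts H1 \<times> verts H2" "q \<in> verts H1 \<times> verts H2"
      unfolding p_def q_def using phin vs by (auto simp: mem_Times_iff)
    have "adj H (g p) (g q)"
      using adjH[OF gin[OF pq(1)] gin[OF pq(2)]] fg[OF pq(1)] fg[OF pq(2)]
        adjH[OF vs(1,2)] adjH[OF vs(3,4)] a0 a1 unfolding p_def q_def by auto
    thus "adj H (f xs) (f ys)" unfolding f_def p_def q_def by simp
  qed
  have idem: "idempotent_op H 2 f"
    unfolding idempotent_op_def f_def
  proof
    fix z assume z: "z \<in> verts H"
    have "replicate 2 z = [z, z]" by (simp add: numeral_2_eq_2)
    thus "g (fst (\<phi> (replicate 2 z ! 0)), snd (\<phi> (replicate 2 z ! 1))) = z"
      using gf[OF z] by simp
  qed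
  obtain i where i: "i < 2" and fi: "\<forall>xs\<in>verts (gpow H 2). f xs = xs ! i"
    using proj hom idem unfolding projective_def by blast
  show False
  proof (cases "i = 0")
    case True
    define xs where "xs = [g (v1, w1), g (v1, w2)]"
    have "xs \<in> verts (gpow H 2)" unfolding xs_def gpow_def using gin v w by auto
    hence "f xs = xs!0" using fi True by simp
    hence "g (v1, w2) = g (v1, w1)" unfolding f_def xs_def using fg v w by simp
    hence "(v1, w2) = (v1, w1)" using ginj v w by blast
    thus False using w by simp
  next
    case False
    hence i1: "i = 1" using i by simp
    define xs where "xs = [g (v1, w1), g (v2, w1)]"
    have "xs \<in> verts (gpow H 2)" unfolding xs_def gpow_def using gin v w by auto
    hence "f xs = xs!1" using fi i1 by simp
    hence "g (v1, w1) = g (v2, w1)" unfolding f_def xs_def using fg v w by simp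
    hence "(v1, w1) = (v2, w1)" using ginj v w by blast
    thus False using v by simp
  qed
qed

end
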